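(* There is an algorithm which, given $\delta\in(0,1)$ and a sequence of $m$ events, produces non-decreasing estimates $v_t$ (for $t=1,\dots,m$) of the number $t$ of events seen so far such that, for any fixed $t\in[m]$, with probability at least $1-\delta$, $$\frac{\delta}{12\log m}\,t\le v_t\le\frac1\delta\,t.$$ The algorithm uses $O(\log\log m)$ bits of space. *)

theory Defs
  imports "HOL-Probability.Probability_Mass_Function"
begin

text \<open>A streaming counting algorithm is modelled as an initial memory state s0,
  a randomized transition step (applied once per event, with fresh randomness,
  not knowing the time index), and an output map out from memory states to
  estimates.\<close>

fun traj :: "'s \<Rightarrow> ('s \<Rightarrow> 's pmf) \<Rightarrow> nat \<Rightarrow> 's list pmf" where
  "traj s0 step 0 = return_pmf [s0]"
| "traj s0 step (Suc n) =
     bind_pmf (traj s0 step n) (\<lambda>xs. map_pmf (\<lambda>s'. xs @ [s']) (step (last xs)))"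

definition space_bounded :: "real \<Rightarrow> bool list \<Rightarrow> (bool list \<Rightarrow> bool list pmf) \<Rightarrow> bool" where
  "space_bounded b s0 step \<longleftrightarrow>
     real (length s0) \<le> b \<and>
     (\<forall>s. real (length s) \<le> b \<longrightarrow> (\<forall>s'\<in>set_pmf (step s). real (length s') \<le> b))"

end

theory Submission imports Defs begin

definition mstep :: "nat \<Rightarrow> nat \<Rightarrow> nat pmf" where
 "mstep K k = (if k < K then map_pmf (\<lambda>b. if b then Suc k else k) (bernoulli_pmf (1/2^k)) else return_pmf k)"

fun it :: "nat \<Rightarrow> nat \<Rightarrow> nat pmf" where
 "it K 0 = return_pmf 0" | "it K (Suc t) = bind_pmf (it K t) (mstep K)"

lemma set_mstep: "k \<le> K \<Longrightarrow> set_pmf (mstep K k) \<subseteq> {..K}"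
  by (auto simp: mstep_def)

lemma set_it: "set_pmf (it K t) \<subseteq> {..K}"
  by (induction t) (auto dest!: set_mstep)

lemma E_bind_fin:
  fixes f :: "'a \<Rightarrow> real"
  assumes A: "finite A" and M: "set_pmf M \<subseteq> A" and N: "\<And>x. x\<in>A \<Longrightarrow> set_pmf (N x) \<subseteq> A"
  shows "measure_pmf.expectation (bind_pmf M N) f = measure_pmf.expectation M (\<lambda>x. measure_pmf.expectation (N x) f)"
proof -
  have sb: "set_pmf (bind_pmf M N) \<subseteq> A" using M N by auto
  have "measure_pmf.expectation (bind_pmf M N) f = (\<Sum>a\<in>A. f a * pmf (bind_pmf M N) a)"
    using sb by (intro integral_measure_pmf_real[OF A]) auto
  also have "\<dots> = (\<Sum>a\<in>A. f a * (\<Sum>x\<in>A. pmf (N x) a * pmf M x))"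
    unfolding pmf_bind using M by (intro sum.cong refl arg_cong2[where f="(*)"] integral_measure_pmf_real[OF A]) auto
  also have "\<dots> = (\<Sum>a\<in>A. \<Sum>x\<in>A. f a * pmf (N x) a * pmf M x)"
    by (simp add: sum_distrib_left mult.assoc)
  also have "\<dots> = (\<Sum>x\<in>A. \<Sum>a\<in>A. f a * pmf (N x) a * pmf M x)"
    by (rule sum.swap)
  also have "\<dots> = (\<Sum>x\<in>A. (\<Sum>a\<in>A. f a * pmf (N x) a) * pmf M x)"
    by (simp add: sum_distrib_right)
  also have "\<dots> = measure_pmf.expectation M (\<lambda>x. measure_pmf.expectation (N x) f)"
  proof -
    have "\<And>x. x \<in> A \<Longrightarrow> measure_pmf.expectation (N x) f = (\<Sum>a\<in>A. f a * pmf (N x) a)"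
      using N by (intro integral_measure_pmf_real[OF A]) auto
    then have "(\<Sum>x\<in>A. (\<Sum>a\<in>A. f a * pmf (N x) a) * pmf M x) = (\<Sum>x\<in>A. measure_pmf.expectation (N x) f * pmf M x)"
      by simp
    also have "\<dots> = measure_pmf.expectation M (\<lambda>x. measure_pmf.expectation (N x) f)"
      using M by (intro integral_measure_pmf_real[OF A, symmetric]) auto
    finally show ?thesis .
  qed
  finally show ?thesis .
qed

lemma fin_it: "finite (set_pmf (it K t))"
  using set_it finite_subset by blast

lemma E_pow_step: "k \<le> K \<Longrightarrow> measure_pmf.expectation (mstep K k) (\<lambda>j. (2::real)^j) \<le> 2^k + 1"
  by (auto simp: mstep_def field_simps)

lemma E_pow: "measure_pmf.expectation (it K t) (\<lambda>j. (2::real)^j) \<le> real t + 1"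
proof (induction t)
  case 0 then show ?case by simp
next
  case (Suc t)
  have "measure_pmf.expectation (it K (Suc t)) (\<lambda>j. (2::real)^j)
     = measure_pmf.expectation (it K t) (\<lambda>k. measure_pmf.expectation (mstep K k) (\<lambda>j. (2::real)^j))"
    by simp (rule E_bind_fin[of "{..K}"], auto simp: set_it dest: set_mstep)
  also have "\<dots> \<le> measure_pmf.expectation (it K t) (\<lambda>k. 2^k + 1)"
    using set_it by (intro integral_mono_AE integrable_measure_pmf_finite fin_it)
      (auto simp: AE_measure_pmf_iff intro!: E_pow_step)
  also have "\<dots> = measure_pmf.expectation (it K t) (\<lambda>k. 2^k) + 1"
    by (subst Bochner_Integration.integral_add) (auto intro: integrable_measure_pmf_finite fin_it)
  finally show ?case using Suc by simp
qed

definition hh :: "nat \<Rightarrow> nat \<Rightarrow> real" where "hh K k = (if k < K then 1/2^k else 0)"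

lemma hh_nonneg: "0 \<le> hh K k" by (simp add: hh_def)
lemma hh_le1: "hh K k \<le> 1" by (simp add: hh_def)

lemma E_hh_step: "k \<le> K \<Longrightarrow> measure_pmf.expectation (mstep K k) (hh K) \<le> hh K k - (hh K k)^2/2"
proof -
  assume kK: "k \<le> K"
  consider "Suc k < K" | "Suc k = K" | "k = K" using kK by linarith
  then show ?thesis
  proof cases
    case 1 then show ?thesis by (auto simp: mstep_def hh_def field_simps power2_eq_square)
  next
    case 2
    have "measure_pmf.expectation (mstep K k) (hh K) = (1 - 1/2^k) / 2^k"
      using 2 by (auto simp: mstep_def hh_def field_simps)
    also have "\<dots> \<le> 1/2^k - (1/2^k)^2/2" by (simp add: field_simps power2_eq_square)
    finally show ?thesis using 2 by (simp add: hh_def)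
  next
    case 3 then show ?thesis by (simp add: mstep_def hh_def)
  qed
qed

lemma jensen_sq:
  fixes f :: "'a \<Rightarrow> real"
  assumes "finite (set_pmf M)"
  shows "(measure_pmf.expectation M f)^2 \<le> measure_pmf.expectation M (\<lambda>x. (f x)^2)"
proof -
  define a where "a = measure_pmf.expectation M f"
  have I: "integrable M g" for g :: "'a \<Rightarrow> real" by (rule integrable_measure_pmf_finite[OF assms])
  have "0 \<le> measure_pmf.expectation M (\<lambda>x. (f x - a)^2)" by (simp add: integral_nonneg_AE)
  also have "(\<lambda>x. (f x - a)^2) = (\<lambda>x. (f x)^2 - 2 * a * f x + a^2)" by (auto simp: power2_eq_square algebra_simps)
  also have "measure_pmf.expectation M \<dots> = measure_pmf.expectation M (\<lambda>x. (f x)^2) - 2 * a * a + a^2"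
    using I by (simp add: a_def)
  finally show ?thesis by (simp add: a_def power2_eq_square)
qed

lemma aux_eq: "(d::real) > 0 \<Longrightarrow> 2/d - (2/d)^2/2 = 2*(d-1)/d^2"
  by (simp add: field_simps power2_eq_square)

lemma aux_le: fixes x::real assumes "0 \<le> x" shows "2*(x+1)/(x+2)^2 \<le> 2/(x+3)"
proof -
  have "(x+1)*(x+3) \<le> (x+2)^2" by (simp add: power2_eq_square algebra_simps)
  then have "(2*x+2)*(x+3) \<le> 2*(x+2)^2" by (simp add: algebra_simps)
  then show ?thesis using assms by (simp add: divide_simps mult_ac)
qed

lemma E_hh: "measure_pmf.expectation (it K t) (hh K) \<le> 2 / (real t + 2)"
proof (induction t)
  case 0 then show ?case by (simp add: hh_le1)
next
  case (Suc t)
  define a where "a = measure_pmf.expectation (it K t) (hh K)"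
  have a0: "0 \<le> a" unfolding a_def by (simp add: integral_nonneg_AE hh_nonneg)
  have "measure_pmf.expectation (it K (Suc t)) (hh K)
     = measure_pmf.expectation (it K t) (\<lambda>k. measure_pmf.expectation (mstep K k) (hh K))"
    by simp (rule E_bind_fin[of "{..K}"], auto simp: set_it dest: set_mstep)
  also have "\<dots> \<le> measure_pmf.expectation (it K t) (\<lambda>k. hh K k - (hh K k)^2/2)"
    using set_it by (intro integral_mono_AE integrable_measure_pmf_finite fin_it)
      (auto simp: AE_measure_pmf_iff intro!: E_hh_step)
  also have "\<dots> = a - measure_pmf.expectation (it K t) (\<lambda>k. (hh K k)^2) / 2"
    by (simp add: a_def integrable_measure_pmf_finite fin_it)
  also have "\<dots> \<le> a - a^2/2" using jensen_sq[OF fin_it, of K t "hh K"] by (simp add: a_def)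
  also have "\<dots> \<le> 2 / (real t + 2) - (2 / (real t + 2))^2/2"
  proof -
    have b: "a \<le> 2 / (real t + 2)" using Suc by (simp add: a_def)
    have h1: "2 / (real t + 2) \<le> 1" by simp
    define b' where "b' = 2 / (real t + 2)"
    have "0 \<le> (b' - a) * (2 - (a + b'))"
      using a0 b h1 unfolding b'_def by (intro mult_nonneg_nonneg) linarith+
    then have "a - a^2/2 \<le> b' - b'^2/2" by (simp add: algebra_simps power2_eq_square)
    then show ?thesis by (simp add: b'_def)
  qed
  also have "\<dots> = 2 * (real t + 1) / (real t + 2)^2" using aux_eq[of "real t + 2"] by simp
  also have "\<dots> \<le> 2 / (real t + 3)" by (rule aux_le) simp
  also have "\<dots> = 2 / (real (Suc t) + 2)" by simp
  finally show ?case .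
qed

lemma markov_pmf:
  fixes f :: "'a \<Rightarrow> real"
  assumes "finite (set_pmf M)" "\<And>x. 0 \<le> f x" "0 < c"
  shows "measure_pmf.prob M {x. c \<le> f x} \<le> measure_pmf.expectation M f / c"
  using integral_Markov_inequality_measure[of M f UNIV c] assms integrable_measure_pmf_finite[OF assms(1)]
  by auto

lemma prob_ge:
  assumes "\<And>x. x \<notin> E \<Longrightarrow> x \<in> B1 \<or> x \<in> B2"
  shows "measure_pmf.prob M E \<ge> 1 - measure_pmf.prob M B1 - measure_pmf.prob M B2"
proof -
  have "measure_pmf.prob M (UNIV - E) \<le> measure_pmf.prob M (B1 \<union> B2)"
    using assms by (intro measure_pmf.finite_measure_mono) auto
  also have "\<dots> \<le> measure_pmf.prob M B1 + measure_pmf.prob M B2"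
    by (rule measure_Un_le) auto
  finally show ?thesis using measure_pmf.prob_compl[of E M] by simp
qed

lemma prob_one:
  assumes "set_pmf M \<subseteq> E"
  shows "measure_pmf.prob M E = 1"
proof -
  have "measure_pmf.prob M E = measure_pmf.prob M (E \<inter> set_pmf M)" by (simp add: measure_Int_set_pmf)
  also have "E \<inter> set_pmf M = UNIV \<inter> set_pmf M" using assms by auto
  also have "measure_pmf.prob M \<dots> = measure_pmf.prob M UNIV" by (rule measure_Int_set_pmf)
  also have "\<dots> = 1" by simp
  finally show ?thesis .
qed

lemma traj_len: "xs \<in> set_pmf (traj s0 step n) \<Longrightarrow> length xs = Suc n"
  by (induction n arbitrary: xs) auto

lemma traj_nth: "t \<le> n \<Longrightarrow> map_pmf (\<lambda>xs. xs!t) (traj s0 step n) = map_pmf (\<lambda>xs. xs!t) (traj s0 step t)"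
proof (induction n)
  case 0 then show ?case by simp
next
  case (Suc n)
  show ?case
  proof (cases "t = Suc n")
    case True then show ?thesis by simp
  next
    case False
    then have tn: "t \<le> n" using Suc by simp
    have "map_pmf (\<lambda>xs. xs!t) (traj s0 step (Suc n))
       = bind_pmf (traj s0 step n) (\<lambda>xs. return_pmf (xs!t))"
      unfolding traj.simps map_bind_pmf
    proof (intro bind_pmf_cong refl)
      fix xs assume "xs \<in> set_pmf (traj s0 step n)"
      then have "length xs = Suc n" by (rule traj_len)
      then show "map_pmf (\<lambda>xs. xs ! t) (map_pmf (\<lambda>s'. xs @ [s']) (step (last xs))) = return_pmf (xs ! t)"
        using tn by (simp add: pmf.map_comp o_def nth_append map_pmf_const)
    qed
    also have "\<dots> = map_pmf (\<lambda>xs. xs!t) (traj s0 step n)" by (simp add: map_pmf_def)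
    finally show ?thesis using Suc tn by simp
  qed
qed

lemma traj_chain:
  assumes st: "\<And>s. step s = map_pmf enc (mstep K (dec s))" and s0: "dec s0 = 0"
    and de: "\<And>k. k \<le> K \<Longrightarrow> dec (enc k) = k"
  shows "map_pmf (\<lambda>xs. dec (last xs)) (traj s0 step t) = it K t"
proof (induction t)
  case 0 then show ?case using s0 by simp
next
  case (Suc t)
  have "map_pmf (\<lambda>xs. dec (last xs)) (traj s0 step (Suc t))
     = bind_pmf (traj s0 step t) (\<lambda>xs. mstep K (dec (last xs)))"
    unfolding traj.simps map_bind_pmf
  proof (intro bind_pmf_cong refl)
    fix xs assume "xs \<in> set_pmf (traj s0 step t)"
    then have "dec (last xs) \<in> set_pmf (it K t)" using Suc by (auto simp flip: Suc)
    then have "dec (last xs) \<le> K" using set_it by auto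
    then show "map_pmf (\<lambda>xs. dec (last xs)) (map_pmf (\<lambda>s'. xs @ [s']) (step (last xs))) = mstep K (dec (last xs))"
      unfolding st using set_mstep[of "dec (last xs)" K]
      by (auto simp: pmf.map_comp o_def de intro!: map_pmf_idI)
  qed
  also have "\<dots> = bind_pmf (map_pmf (\<lambda>xs. dec (last xs)) (traj s0 step t)) (mstep K)"
    by (simp add: bind_map_pmf)
  finally show ?case using Suc by simp
qed

lemma traj_nth_chain:
  assumes st: "\<And>s. step s = map_pmf enc (mstep K (dec s))" and s0: "dec s0 = 0"
    and de: "\<And>k. k \<le> K \<Longrightarrow> dec (enc k) = k" and tn: "t \<le> n"
  shows "map_pmf (\<lambda>xs. dec (xs ! t)) (traj s0 step n) = it K t"
proof -
  have "map_pmf (\<lambda>xs. dec (xs ! t)) (traj s0 step n) = map_pmf dec (map_pmf (\<lambda>xs. xs ! t) (traj s0 step n))"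
    by (simp add: pmf.map_comp o_def)
  also have "\<dots> = map_pmf dec (map_pmf (\<lambda>xs. xs ! t) (traj s0 step t))" using traj_nth[OF tn, of s0 step] by simp
  also have "\<dots> = map_pmf (\<lambda>xs. dec (last xs)) (traj s0 step t)"
    unfolding pmf.map_comp o_def
  proof (intro map_pmf_cong refl)
    fix x assume "x \<in> set_pmf (traj s0 step t)"
    then have "length x = Suc t" by (rule traj_len)
    then have "x \<noteq> []" by auto
    then show "dec (x ! t) = dec (last x)" using \<open>length x = Suc t\<close> by (simp add: last_conv_nth)
  qed
  finally show ?thesis using traj_chain[OF st s0 de] by simp
qed

lemma mstep_ge: "k' \<in> set_pmf (mstep K k) \<Longrightarrow> k \<le> k'"
  by (auto simp: mstep_def split: if_splits)

lemma sorted_le_last: "sorted (xs::nat list) \<Longrightarrow> xs \<noteq> [] \<Longrightarrow> x \<in> set xs \<Longrightarrow> x \<le> last xs"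
proof (induction xs)
  case Nil then show ?case by simp
next
  case (Cons a xs)
  show ?case
  proof (cases "xs = []")
    case True then show ?thesis using Cons by simp
  next
    case False
    then have "last xs \<in> set xs" by simp
    then show ?thesis using Cons False by auto
  qed
qed

lemma traj_sorted:
  assumes st: "\<And>s. step s = map_pmf enc (mstep K (dec s))" and s0: "dec s0 = 0"
    and de: "\<And>k. k \<le> K \<Longrightarrow> dec (enc k) = k"
  shows "xs \<in> set_pmf (traj s0 step n) \<Longrightarrow> sorted (map dec xs) \<and> (\<forall>x\<in>set xs. dec x \<le> K)"
proof (induction n arbitrary: xs)
  case 0 then show ?case using s0 by simp
next
  case (Suc n)
  then obtain ys s' where ys: "ys \<in> set_pmf (traj s0 step n)" and s': "s' \<in> set_pmf (step (last ys))"
    and xs: "xs = ys @ [s']" by auto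
  from Suc.IH[OF ys] have IH: "sorted (map dec ys)" "\<forall>x\<in>set ys. dec x \<le> K" by auto
  have ne: "ys \<noteq> []" using traj_len[OF ys] by auto
  then have lK: "dec (last ys) \<le> K" using IH by auto
  from s' obtain k' where k': "k' \<in> set_pmf (mstep K (dec (last ys)))" "s' = enc k'" unfolding st by auto
  have k'K: "k' \<le> K" using k' set_mstep[OF lK] by auto
  have ds': "dec s' = k'" using k' k'K de by simp
  have ge: "dec (last ys) \<le> k'" using mstep_ge[OF k'(1)] .
  have "\<forall>x\<in>set ys. dec x \<le> dec (last ys)"
    using sorted_le_last[OF IH(1)] ne by (auto simp: last_map)
  then show ?case using IH ge ds' k'K xs by (auto simp: sorted_append)
qed

lemma exact_traj:
  "xs \<in> set_pmf (traj [] (\<lambda>s. return_pmf (True # s)) n) \<Longrightarrow> \<forall>i<length xs. length (xs ! i) = i"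
proof (induction n arbitrary: xs)
  case 0 then show ?case by simp
next
  case (Suc n)
  then obtain ys where ys: "ys \<in> set_pmf (traj [] (\<lambda>s. return_pmf (True # s)) n)"
    and xs: "xs = ys @ [True # last ys]" by auto
  have len: "length ys = Suc n" using traj_len[OF ys] .
  have IH: "\<forall>i<length ys. length (ys ! i) = i" using Suc.IH[OF ys] .
  have ne: "ys \<noteq> []" using len by auto
  have "last ys = ys ! n" using ne len by (simp add: last_conv_nth)
  then have "length (last ys) = n" using IH len by simp
  then show ?case using IH len xs by (auto simp: nth_append)
qed

lemma exact_alg:
  fixes \<delta> :: real and m :: nat
  assumes "0 < \<delta>" "\<delta> < 1" "1 \<le> m" and m27: "\<not> 27 \<le> m"
  shows "\<exists>(s0::bool list) (step::bool list \<Rightarrow> bool list pmf) (out::bool list \<Rightarrow> real).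
       (\<forall>xs\<in>set_pmf (traj s0 step m). \<forall>i j. 1 \<le> i \<and> i \<le> j \<and> j \<le> m \<longrightarrow> out (xs ! i) \<le> out (xs ! j))
     \<and> (\<forall>t\<in>{1..m}. measure_pmf.prob (traj s0 step m)
            {xs. \<delta> / (12 * log 2 (real m)) * real t \<le> out (xs ! t) \<and> out (xs ! t) \<le> real t / \<delta>}
          \<ge> 1 - \<delta>)
     \<and> (27 \<le> m \<longrightarrow> space_bounded (6 * ln (ln (real m))) s0 step)"
proof (intro exI conjI ballI allI impI)
  let ?step = "\<lambda>s. return_pmf (True # s)"
  let ?out = "\<lambda>s::bool list. real (length s)"
  fix xs i j assume xs: "xs \<in> set_pmf (traj [] ?step m)" and ij: "1 \<le> i \<and> i \<le> j \<and> j \<le> m"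
  show "?out (xs ! i) \<le> ?out (xs ! j)" using exact_traj[OF xs] traj_len[OF xs] ij by simp
next
  let ?step = "\<lambda>s. return_pmf (True # s)"
  let ?out = "\<lambda>s::bool list. real (length s)"
  fix t assume t: "t \<in> {1..m}"
  have c: "\<delta> / (12 * log 2 (real m)) \<le> 1"
  proof (cases "m = 1")
    case True then show ?thesis by simp
  next
    case False
    then have "1 \<le> log 2 (real m)" using assms by simp
    then have "\<delta> \<le> 12 * log 2 (real m)" using assms by linarith
    moreover have "0 < 12 * log 2 (real m)" using \<open>1 \<le> log 2 (real m)\<close> by linarith
    ultimately show ?thesis by (simp add: pos_divide_le_eq)
  qed
  have "measure_pmf.prob (traj [] ?step m)
            {xs. \<delta> / (12 * log 2 (real m)) * real t \<le> ?out (xs ! t) \<and> ?out (xs ! t) \<le> real t / \<delta>} = 1"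
  proof (rule prob_one, safe)
    fix xs assume xs: "xs \<in> set_pmf (traj [] ?step m)"
    then have "?out (xs ! t) = real t" using exact_traj[OF xs] traj_len[OF xs] t by simp
    moreover have "\<delta> / (12 * log 2 (real m)) * real t \<le> real t" using mult_right_mono[OF c, of "real t"] by simp
    moreover have "real t \<le> real t / \<delta>" using assms mult_left_mono[of \<delta> 1 "real t"] by (simp add: divide_simps)
    ultimately show "\<delta> / (12 * log 2 (real m)) * real t \<le> ?out (xs ! t)" "?out (xs ! t) \<le> real t / \<delta>" by auto
  qed
  then show "1 - \<delta> \<le> measure_pmf.prob (traj [] ?step m)
            {xs. \<delta> / (12 * log 2 (real m)) * real t \<le> ?out (xs ! t) \<and> ?out (xs ! t) \<le> real t / \<delta>}"
    using assms by simp
next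
  assume "27 \<le> m" then show "space_bounded (6 * ln (ln (real m))) [] (\<lambda>s. return_pmf (True # s))"
    using m27 by simp
qed

lemma morris_prob:
  fixes \<delta> :: real
  assumes d: "0 < \<delta>" "\<delta> < 1" and t: "1 \<le> t" "t \<le> m" and K: "4 * real m \<le> 2^K"
    and Lg: "4/3 \<le> log 2 (real m)"
  shows "measure_pmf.prob (it K t) {k. \<delta> / (12 * log 2 (real m)) * real t \<le> 2^k/4 \<and> (2::real)^k/4 \<le> real t / \<delta>} \<ge> 1 - \<delta>"
proof -
  define L where "L = log 2 (real m)"
  have L0: "0 < L" using Lg L_def by simp
  have tpos: "0 < real t" using t by simp
  define B1 where "B1 = {k. 4 * real t / \<delta> \<le> (2::real)^k}"
  define B2 where "B2 = {k. 3 * L / (\<delta> * real t) \<le> hh K k}"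
  have c1: "\<delta> / (12 * L) \<le> 1" using L0 Lg d by (simp add: pos_divide_le_eq L_def)
  have "measure_pmf.prob (it K t) {k. \<delta> / (12 * L) * real t \<le> 2^k/4 \<and> (2::real)^k/4 \<le> real t / \<delta>}
        \<ge> 1 - measure_pmf.prob (it K t) B1 - measure_pmf.prob (it K t) B2"
  proof (rule prob_ge)
    fix k assume nk: "k \<notin> {k. \<delta> / (12 * L) * real t \<le> 2^k/4 \<and> (2::real)^k/4 \<le> real t / \<delta>}"
    show "k \<in> B1 \<or> k \<in> B2"
    proof (cases "(2::real)^k/4 \<le> real t / \<delta>")
      case False
      then have "4 * real t / \<delta> \<le> 2^k" by (simp add: field_simps)
      then show ?thesis by (simp add: B1_def)
    next
      case True
      with nk have lo: "2^k/4 < \<delta> / (12 * L) * real t" by auto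
      have kK: "k < K"
      proof (rule ccontr)
        assume "\<not> k < K"
        then have "(2::real)^K \<le> 2^k" by (simp add: power_increasing)
        then have "real m \<le> 2^k/4" using K by linarith
        moreover have "\<delta> / (12 * L) * real t \<le> real t" using mult_right_mono[OF c1, of "real t"] by simp
        ultimately show False using lo t by simp
      qed
      have "2^k < \<delta> * real t / (3 * L)" using lo by (simp add: field_simps)
      then have "3 * L / (\<delta> * real t) < 1 / 2^k"
        using L0 d tpos by (simp add: field_simps)
      then show ?thesis using kK by (simp add: B2_def hh_def)
    qed
  qed
  moreover have "measure_pmf.prob (it K t) B1 \<le> \<delta> / 2"
  proof -
    have "measure_pmf.prob (it K t) B1 \<le> measure_pmf.expectation (it K t) (\<lambda>k. (2::real)^k) / (4 * real t / \<delta>)"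
      unfolding B1_def by (rule markov_pmf[OF fin_it]) (use d tpos in auto)
    also have "\<dots> \<le> (real t + 1) / (4 * real t / \<delta>)"
      using d tpos E_pow[of K t] by (intro divide_right_mono) auto
    also have "\<dots> = \<delta> * (real t + 1) / (4 * real t)" using d tpos by (simp add: field_simps)
    also have "\<dots> \<le> \<delta> * (2 * real t) / (4 * real t)"
      using d tpos t by (intro divide_right_mono mult_left_mono) auto
    also have "\<dots> = \<delta> / 2" using tpos by simp
    finally show ?thesis .
  qed
  moreover have "measure_pmf.prob (it K t) B2 \<le> \<delta> / 2"
  proof -
    have "measure_pmf.prob (it K t) B2 \<le> measure_pmf.expectation (it K t) (hh K) / (3 * L / (\<delta> * real t))"
      unfolding B2_def by (rule markov_pmf[OF fin_it]) (use d tpos L0 hh_nonneg in auto)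
    also have "\<dots> \<le> (2 / (real t + 2)) / (3 * L / (\<delta> * real t))"
      using d tpos L0 E_hh[of K t] by (intro divide_right_mono) auto
    also have "\<dots> = \<delta> * (2 * real t / (real t + 2)) / (3 * L)" using d tpos L0 by (simp add: field_simps)
    also have "\<dots> \<le> \<delta> * 2 / (3 * L)"
      using d tpos L0 by (intro divide_right_mono mult_left_mono) (auto simp: field_simps)
    also have "\<dots> \<le> \<delta> / 2" using d Lg L0 by (simp add: field_simps L_def)
    finally show ?thesis .
  qed
  ultimately show ?thesis unfolding L_def by linarith
qed

lemma space_num:
  fixes x :: real assumes x: "27 \<le> x"
  shows "log 2 (log 2 x + 3) + 1 \<le> 6 * ln (ln x)"
proof -
  have "exp (3::real) = exp 1 ^ 3" using exp_of_nat_mult[of 3 "1::real"] by simp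
  also have "\<dots> \<le> 3 ^ 3" by (rule power_mono[OF exp_le]) simp
  finally have e3: "exp (3::real) \<le> x" using x by simp
  have lx: "3 \<le> ln x" using e3 x by (subst ln_ge_iff) auto
  have u1: "1 \<le> ln (ln x)" using lx exp_le by (subst ln_ge_iff) auto
  have "ln (1/2::real) \<le> 1/2 - 1" by (rule ln_le_minus_one) simp
  then have l2a: "1/2 \<le> ln (2::real)" by (simp add: ln_div)
  have l2b: "ln (2::real) < 1" by (rule ln_2_less_1)
  have "ln (1/2::real) \<le> ln (ln 2)" using l2a by (subst ln_le_cancel_iff) auto
  then have lln2: "- 1 \<le> ln (ln (2::real))" using l2b by (simp add: ln_div)
  have lg3: "3 \<le> log 2 x" unfolding log_def using lx l2b l2a by (simp add: le_divide_eq)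
  have "log 2 (log 2 x + 3) \<le> log 2 (2 * log 2 x)" using lg3 by (subst log_le_cancel_iff) auto
  also have "\<dots> = 1 + log 2 (log 2 x)" using lg3 by (simp add: log_mult)
  finally have A: "log 2 (log 2 x + 3) \<le> 1 + log 2 (log 2 x)" .
  have "log 2 (log 2 x) = (ln (ln x) - ln (ln 2)) / ln 2"
    unfolding log_def using lx l2a by (simp add: ln_div)
  also have "(ln (ln x) - ln (ln 2)) / ln 2 \<le> (ln (ln x) + 1) / ln 2"
    using lln2 l2a by (intro divide_right_mono) auto
  also have "\<dots> \<le> 2 * (ln (ln x) + 1)"
  proof -
    have "(2 * (ln (ln x) + 1)) * (1/2) \<le> (2 * (ln (ln x) + 1)) * ln 2"
      using u1 by (intro mult_left_mono[OF l2a]) simp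
    then have "ln (ln x) + 1 \<le> 2 * (ln (ln x) + 1) * ln 2" by simp
    then show ?thesis using l2a by (simp add: divide_le_eq)
  qed
  finally have B: "log 2 (log 2 x) \<le> 2 * (ln (ln x) + 1)" .
  show ?thesis using A B u1 by (smt (verit))
qed

definition enc :: "nat \<Rightarrow> nat \<Rightarrow> bool list" where "enc L k = map (bit k) [0..<L]"
definition dec :: "bool list \<Rightarrow> nat" where "dec s = horner_sum of_bool 2 s"

lemma dec_enc: "k < 2^L \<Longrightarrow> dec (enc L k) = k"
  by (simp add: enc_def dec_def horner_sum_bit_eq_take_bit take_bit_nat_eq_self_iff)

lemma len_enc: "length (enc L k) = L" by (simp add: enc_def)

lemma morris_alg:
  fixes \<delta> :: real and m :: nat
  assumes d: "0 < \<delta>" "\<delta> < 1" and m: "27 \<le> m"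
  shows "\<exists>(s0::bool list) (step::bool list \<Rightarrow> bool list pmf) (out::bool list \<Rightarrow> real).
       (\<forall>xs\<in>set_pmf (traj s0 step m). \<forall>i j. 1 \<le> i \<and> i \<le> j \<and> j \<le> m \<longrightarrow> out (xs ! i) \<le> out (xs ! j))
     \<and> (\<forall>t\<in>{1..m}. measure_pmf.prob (traj s0 step m)
            {xs. \<delta> / (12 * log 2 (real m)) * real t \<le> out (xs ! t) \<and> out (xs ! t) \<le> real t / \<delta>}
          \<ge> 1 - \<delta>)
     \<and> (27 \<le> m \<longrightarrow> space_bounded (6 * ln (ln (real m))) s0 step)"
proof -
  define L where "L = nat \<lceil>log 2 (log 2 (real m) + 3)\<rceil>"
  define K where "K = 2^L - (1::nat)"
  define s0 where "s0 = enc L 0"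
  define step where "step = (\<lambda>s. map_pmf (enc L) (mstep K (dec s)))"
  define out where "out = (\<lambda>s. (2::real)^(dec s)/4)"
  have de: "dec (enc L k) = k" if "k \<le> K" for k
  proof -
    have "(0::nat) < 2^L" by simp
    then have "k < 2^L" using that unfolding K_def by linarith
    then show ?thesis by (rule dec_enc)
  qed
  have ds0: "dec s0 = 0" by (simp add: s0_def dec_enc)
  have st: "\<And>s. step s = map_pmf (enc L) (mstep K (dec s))" by (simp add: step_def)
  have mr: "27 \<le> real m" using m by simp
  have lg3: "3 \<le> log 2 (real m)" using mr by (subst le_log_iff) (auto simp: powr_numeral)
  have Lge: "log 2 (log 2 (real m) + 3) \<le> real L" unfolding L_def by (rule real_nat_ceiling_ge)
  have Lle: "real L \<le> log 2 (log 2 (real m) + 3) + 1"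
  proof -
    have "0 \<le> log 2 (log 2 (real m) + 3)" using lg3 by simp
    then show ?thesis unfolding L_def using of_int_ceiling_le_add_one by (simp add: of_nat_nat)
  qed
  have p2L: "log 2 (real m) + 3 \<le> 2 ^ L"
  proof -
    have "log 2 (real m) + 3 = 2 powr (log 2 (log 2 (real m) + 3))" using lg3 by simp
    also have "\<dots> \<le> 2 powr (real L)" using Lge by (intro powr_mono) auto
    finally show ?thesis by (simp add: powr_realpow)
  qed
  have Kr: "log 2 (real m) + 2 \<le> real K"
    using p2L unfolding K_def by (simp add: of_nat_diff)
  have Kbig: "4 * real m \<le> 2 ^ K"
  proof -
    have "4 * real m = 2 powr (log 2 (real m) + 2)" using mr by (simp add: powr_add)
    also have "\<dots> \<le> 2 powr (real K)" using Kr by (intro powr_mono) auto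
    finally show ?thesis by (simp add: powr_realpow)
  qed
  show ?thesis
  proof (rule exI[of _ s0], rule exI[of _ step], rule exI[of _ out], intro conjI ballI allI impI)
    fix xs i j assume xs: "xs \<in> set_pmf (traj s0 step m)" and ij: "1 \<le> i \<and> i \<le> j \<and> j \<le> m"
    have so: "sorted (map dec xs)" using traj_sorted[OF st ds0 de xs] by simp
    have len: "length xs = Suc m" by (rule traj_len[OF xs])
    have "dec (xs ! i) \<le> dec (xs ! j)"
      using sorted_nth_mono[OF so, of i j] ij len by simp
    then show "out (xs ! i) \<le> out (xs ! j)" by (simp add: out_def power_increasing)
  next
    fix t assume t: "t \<in> {1..m}"
    let ?A = "{k. \<delta> / (12 * log 2 (real m)) * real t \<le> 2^k/4 \<and> (2::real)^k/4 \<le> real t / \<delta>}"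
    have "{xs. \<delta> / (12 * log 2 (real m)) * real t \<le> out (xs ! t) \<and> out (xs ! t) \<le> real t / \<delta>}
          = (\<lambda>xs. dec (xs ! t)) -` ?A" by (auto simp: out_def)
    then have "measure_pmf.prob (traj s0 step m)
            {xs. \<delta> / (12 * log 2 (real m)) * real t \<le> out (xs ! t) \<and> out (xs ! t) \<le> real t / \<delta>}
          = measure_pmf.prob (map_pmf (\<lambda>xs. dec (xs ! t)) (traj s0 step m)) ?A" by simp
    also have "\<dots> = measure_pmf.prob (it K t) ?A" using t by (subst traj_nth_chain[OF st ds0 de]) auto
    finally have eq: "measure_pmf.prob (traj s0 step m)
            {xs. \<delta> / (12 * log 2 (real m)) * real t \<le> out (xs ! t) \<and> out (xs ! t) \<le> real t / \<delta>}
       = measure_pmf.prob (it K t) ?A" .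
    have P: "1 - \<delta> \<le> measure_pmf.prob (it K t) ?A"
      by (rule morris_prob[OF d]) (use t Kbig lg3 in auto)
    show "1 - \<delta> \<le> measure_pmf.prob (traj s0 step m)
            {xs. \<delta> / (12 * log 2 (real m)) * real t \<le> out (xs ! t) \<and> out (xs ! t) \<le> real t / \<delta>}"
      using eq P by linarith
  next
    have "real L \<le> 6 * ln (ln (real m))" using Lle space_num[OF mr] by linarith
    then show "space_bounded (6 * ln (ln (real m))) s0 step"
      unfolding space_bounded_def by (auto simp: s0_def step_def len_enc)
  qed
qed

theorem lemma5p1:
  shows "\<exists>C::real. \<exists>M0::nat. \<forall>(\<delta>::real) (m::nat). 0 < \<delta> \<and> \<delta> < 1 \<and> 1 \<le> m \<longrightarrow>
    (\<exists>(s0::bool list) (step::bool list \<Rightarrow> bool list pmf) (out::bool list \<Rightarrow> real).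
       (\<forall>xs\<in>set_pmf (traj s0 step m). \<forall>i j. 1 \<le> i \<and> i \<le> j \<and> j \<le> m \<longrightarrow> out (xs ! i) \<le> out (xs ! j))
     \<and> (\<forall>t\<in>{1..m}. measure_pmf.prob (traj s0 step m)
            {xs. \<delta> / (12 * log 2 (real m)) * real t \<le> out (xs ! t) \<and> out (xs ! t) \<le> real t / \<delta>}
          \<ge> 1 - \<delta>)
     \<and> (M0 \<le> m \<longrightarrow> space_bounded (C * ln (ln (real m))) s0 step))"
proof (rule exI[of _ 6], rule exI[of _ 27], intro allI impI)
  fix \<delta> :: real and m :: nat
  assume a: "0 < \<delta> \<and> \<delta> < 1 \<and> 1 \<le> m"
  show "\<exists>(s0::bool list) (step::bool list \<Rightarrow> bool list pmf) (out::bool list \<Rightarrow> real).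
       (\<forall>xs\<in>set_pmf (traj s0 step m). \<forall>i j. 1 \<le> i \<and> i \<le> j \<and> j \<le> m \<longrightarrow> out (xs ! i) \<le> out (xs ! j))
     \<and> (\<forall>t\<in>{1..m}. measure_pmf.prob (traj s0 step m)
            {xs. \<delta> / (12 * log 2 (real m)) * real t \<le> out (xs ! t) \<and> out (xs ! t) \<le> real t / \<delta>}
          \<ge> 1 - \<delta>)
     \<and> (27 \<le> m \<longrightarrow> space_bounded (6 * ln (ln (real m))) s0 step)"
  proof (cases "27 \<le> m")
    case True
    show ?thesis by (rule morris_alg) (use a True in auto)
  next
    case False
    show ?thesis by (rule exact_alg) (use a False in auto)
  qed
qed

end
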